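(* For every integer $k>1$ there exists $g\in[\mathbb{F}_2,\mathbb{F}_2]$ such that $g\in G_{k-1}$ with $\varphi_j(g)=0$ for all $j<k$ and $\varphi_k(g)=-1$, and such that $g\in H_j$ with $\psi_j(g)=0$ for all $j\ge1$.
   Context: $\mathbb{F}_2$ is the free group on $x,y$. Let $\tilde K$ be the graph with vertex set $\mathbb{Z}^2$ and oriented edges $x^iy^jX$ from $(i,j)$ to $(i+1,j)$ and $x^iy^jY$ from $(i,j)$ to $(i,j+1)$. A $1$-chain is written $\alpha=P_\alpha(x,y)X+Q_\alpha(x,y)Y$ with $P_\alpha,Q_\alpha$ integer Laurent polynomials (coefficient of $x^iy^j$ in $P_\alpha$ = coefficient of edge $x^iy^jX$, similarly for $Q_\alpha$). For $g\in[\mathbb{F}_2,\mathbb{F}_2]$ written as a word in $x^{\pm1},y^{\pm1}$, the cycle $\alpha_g$ is the $1$-cycle traced by the lattice path from $(0,0)$ in which $x,x^{-1},y,y^{-1}$ move by $(1,0),(-1,0),(0,1),(0,-1)$ along the corresponding edges, each edge counted with sign $+1$ if traversed in its orientation and $-1$ otherwise; its homology class depends only on $g$. Put $f_g(y)=P_{\alpha_g}(1,y)$ and $g_g(x)=Q_{\alpha_g}(x,1)$. Set $G_0=H_0=[\mathbb{F}_2,\mathbb{F}_2]$ and inductively, for $k\ge1$, $\varphi_k(g)=f_g^{(k)}(1)/k!$ for $g\in G_{k-1}$, $\psi_k(g)=g_g^{(k)}(1)/k!$ for $g\in H_{k-1}$, $G_k=\ker\varphi_k$, $H_k=\ker\psi_k$.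 *)

theory Defs
  imports "HOL-Analysis.Analysis"
begin

datatype letter = Xp | Xm | Yp | Ym

type_synonym word = "letter list"

fun linv :: "letter \<Rightarrow> letter" where
  "linv Xp = Xm" | "linv Xm = Xp" | "linv Yp = Ym" | "linv Ym = Yp"

definition winv :: "word \<Rightarrow> word" where
  "winv w = rev (map linv w)"

text \<open>Words representing elements of the commutator subgroup [F_2,F_2]:
  products of commutators a^-1 b^-1 a b, closed under free (in)sertion/cancellation
  of pairs l l^-1 (i.e. under equality in F_2).\<close>
inductive comm_word :: "word \<Rightarrow> bool" where
  cw_nil: "comm_word []"
| cw_comm: "comm_word w \<Longrightarrow> comm_word (w @ winv a @ winv b @ a @ b)"
| cw_ins: "comm_word (u @ v) \<Longrightarrow> comm_word (u @ [l, linv l] @ v)"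
| cw_del: "comm_word (u @ [l, linv l] @ v) \<Longrightarrow> comm_word (u @ v)"

text \<open>Edges of the lattice graph: x^i y^j X is (i,j,DX), x^i y^j Y is (i,j,DY).\<close>
datatype dir = DX | DY

type_synonym edge = "int \<times> int \<times> dir"

text \<open>The 1-chain traced by the lattice path of a word starting at a given vertex.\<close>
fun chain :: "int \<times> int \<Rightarrow> word \<Rightarrow> edge \<Rightarrow> int" where
  "chain p [] = (\<lambda>e. 0)"
| "chain (i, j) (Xp # w) = (\<lambda>e. (if e = (i, j, DX) then 1 else 0) + chain (i + 1, j) w e)"
| "chain (i, j) (Xm # w) = (\<lambda>e. (if e = (i - 1, j, DX) then -1 else 0) + chain (i - 1, j) w e)"
| "chain (i, j) (Yp # w) = (\<lambda>e. (if e = (i, j, DY) then 1 else 0) + chain (i, j + 1) w e)"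
| "chain (i, j) (Ym # w) = (\<lambda>e. (if e = (i, j - 1, DY) then -1 else 0) + chain (i, j - 1) w e)"

definition alpha :: "word \<Rightarrow> edge \<Rightarrow> int" where
  "alpha w = chain (0, 0) w"

definition Pc :: "(edge \<Rightarrow> int) \<Rightarrow> int \<times> int \<Rightarrow> int" where
  "Pc a ij = a (fst ij, snd ij, DX)"

definition Qc :: "(edge \<Rightarrow> int) \<Rightarrow> int \<times> int \<Rightarrow> int" where
  "Qc a ij = a (fst ij, snd ij, DY)"

text \<open>f_g(y) = P_{alpha_g}(1,y) and g_g(x) = Q_{alpha_g}(x,1), as real functions.\<close>
definition fg :: "word \<Rightarrow> real \<Rightarrow> real" where
  "fg w y = (\<Sum>ij\<in>{ij. Pc (alpha w) ij \<noteq> 0}. of_int (Pc (alpha w) ij) * y powi (snd ij))"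

definition gg :: "word \<Rightarrow> real \<Rightarrow> real" where
  "gg w x = (\<Sum>ij\<in>{ij. Qc (alpha w) ij \<noteq> 0}. of_int (Qc (alpha w) ij) * x powi (fst ij))"

definition phi :: "nat \<Rightarrow> word \<Rightarrow> real" where
  "phi k w = (deriv ^^ k) (fg w) 1 / fact k"

definition psi :: "nat \<Rightarrow> word \<Rightarrow> real" where
  "psi k w = (deriv ^^ k) (gg w) 1 / fact k"

fun Gs :: "nat \<Rightarrow> word set" where
  "Gs 0 = {w. comm_word w}"
| "Gs (Suc k) = {w \<in> Gs k. phi (Suc k) w = 0}"

fun Hs :: "nat \<Rightarrow> word set" where
  "Hs 0 = {w. comm_word w}"
| "Hs (Suc k) = {w \<in> Hs k. psi (Suc k) w = 0}"

end

theory Submission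
  imports Defs
begin

fun endp :: "int \<times> int \<Rightarrow> word \<Rightarrow> int \<times> int" where
  "endp p [] = p"
| "endp (i, j) (Xp # w) = endp (i + 1, j) w"
| "endp (i, j) (Xm # w) = endp (i - 1, j) w"
| "endp (i, j) (Yp # w) = endp (i, j + 1) w"
| "endp (i, j) (Ym # w) = endp (i, j - 1) w"

lemma chain_append: "chain p (u @ v) e = chain p u e + chain (endp p u) v e"
proof (induction u arbitrary: p)
  case Nil then show ?case by simp
next
  case (Cons l u) then show ?case by (cases p; cases l) auto
qed

lemma endp_append: "endp p (u @ v) = endp (endp p u) v"
proof (induction u arbitrary: p)
  case Nil then show ?case by simp
next
  case (Cons l u) then show ?case by (cases p; cases l) auto
qed

lemma chain_shift: "chain (i, j) w (a, b, d) = chain (0, 0) w (a - i, b - j, d)"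
proof (induction w arbitrary: i j a b)
  case Nil then show ?case by simp
next
  case (Cons l w)
  note IH = Cons
  show ?case
  proof (cases l)
    case Xp
    have 1: "chain (i + 1, j) w (a, b, d) = chain (0, 0) w (a - i - 1, b - j, d)" using IH[of "i+1" j a b] by (simp add: algebra_simps)
    have 2: "chain (1, 0) w (a - i, b - j, d) = chain (0, 0) w (a - i - 1, b - j, d)" using IH[of 1 0 "a - i" "b - j"] by simp
    show ?thesis using Xp 1 2 by simp
  next
    case Xm
    have 1: "chain (i - 1, j) w (a, b, d) = chain (0, 0) w (a - i + 1, b - j, d)" using IH[of "i - 1" j a b] by (simp add: algebra_simps)
    have 2: "chain (- 1, 0) w (a - i, b - j, d) = chain (0, 0) w (a - i + 1, b - j, d)" using IH[of "-1" 0 "a - i" "b - j"] by simp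
    show ?thesis using Xm 1 2 by (simp add: algebra_simps)
  next
    case Yp
    have 1: "chain (i, j + 1) w (a, b, d) = chain (0, 0) w (a - i, b - j - 1, d)" using IH[of i "j+1" a b] by (simp add: algebra_simps)
    have 2: "chain (0, 1) w (a - i, b - j, d) = chain (0, 0) w (a - i, b - j - 1, d)" using IH[of 0 1 "a - i" "b - j"] by simp
    show ?thesis using Yp 1 2 by simp
  next
    case Ym
    have 1: "chain (i, j - 1) w (a, b, d) = chain (0, 0) w (a - i, b - j + 1, d)" using IH[of i "j - 1" a b] by (simp add: algebra_simps)
    have 2: "chain (0, - 1) w (a - i, b - j, d) = chain (0, 0) w (a - i, b - j + 1, d)" using IH[of 0 "-1" "a - i" "b - j"] by simp
    show ?thesis using Ym 1 2 by (simp add: algebra_simps)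
  qed
qed

lemma endp_shift: "endp (i, j) w = (i + fst (endp (0, 0) w), j + snd (endp (0, 0) w))"
proof (induction w arbitrary: i j)
  case Nil then show ?case by simp
next
  case (Cons l w)
  note IH = Cons
  show ?case
    by (cases l) (simp_all add: IH[of "i+1" j] IH[of 1 0] IH[of "i - 1" j] IH[of "-1" 0]
         IH[of i "j+1"] IH[of 0 1] IH[of i "j - 1"] IH[of 0 "-1"])
qed

lemma winv_cons: "winv (l # u) = winv u @ [linv l]"
  by (simp add: winv_def)

lemma chain_winv: "chain p (winv u) e = - chain (endp p (winv u)) u e \<and> endp (endp p (winv u)) u = p"
proof (induction u arbitrary: p)
  case Nil then show ?case by (simp add: winv_def)
next
  case (Cons l u)
  obtain i j where q: "endp p (winv u) = (i, j)" by fastforce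
  have IH1: "chain p (winv u) e = - chain (i, j) u e" and IH2: "endp (i, j) u = p" using Cons[of p] q by auto
  show ?case
    by (cases l) (simp_all add: winv_cons chain_append endp_append q IH1 IH2)
qed


fun wd :: "nat \<Rightarrow> word" where
  "wd 0 = [Yp, Xm, Ym, Xp]"
| "wd (Suc n) = winv (wd n) @ [Yp] @ wd n @ [Ym]"

lemma wd_comm: "comm_word (wd n)"
proof (cases n)
  case 0
  have "comm_word ([] @ winv [Ym] @ winv [Xp] @ [Ym] @ [Xp])" by (rule cw_comm, rule cw_nil)
  then show ?thesis using 0 by (simp add: winv_def)
next
  case (Suc m)
  have "comm_word ([] @ winv (wd m) @ winv [Ym] @ wd m @ [Ym])" by (rule cw_comm, rule cw_nil)
  then show ?thesis using Suc by (simp add: winv_def)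
qed

lemma endp_closed: "endp (0, 0) w = (0, 0) \<Longrightarrow> endp p w = p"
  using endp_shift[of "fst p" "snd p" w] by simp

lemma winv_closed: assumes "endp (0, 0) w = (0, 0)" shows "endp (0, 0) (winv w) = (0, 0)"
proof -
  have "endp (endp (0,0) (winv w)) w = (0,0)" using chain_winv by blast
  moreover have "endp (endp (0,0) (winv w)) w = endp (0,0) (winv w)" using endp_closed[OF assms] by blast
  ultimately show ?thesis by simp
qed

lemma wd_closed: "endp (0, 0) (wd n) = (0, 0)"
proof (induction n)
  case 0 then show ?case by simp
next
  case (Suc n)
  have c: "endp p (wd n) = p" for p using endp_closed[OF Suc] .
  have c2: "endp p (winv (wd n)) = p" for p using endp_closed[OF winv_closed[OF Suc]] .
  show ?case by (simp add: endp_append c c2)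
qed

lemma alpha_wd_Suc: "alpha (wd (Suc n)) (i, j, d) = alpha (wd n) (i, j - 1, d) - alpha (wd n) (i, j, d)"
proof -
  have c: "endp p (wd n) = p" for p using endp_closed[OF wd_closed] .
  have c2: "endp p (winv (wd n)) = p" for p using endp_closed[OF winv_closed[OF wd_closed]] .
  have w: "chain (0,0) (winv (wd n)) e = - chain (0,0) (wd n) e" for e using chain_winv[of "(0,0)" "wd n" e] c2 by simp
  have s: "chain (0, 1) (wd n) (i, j, d) = chain (0,0) (wd n) (i, j - 1, d)" using chain_shift[of 0 1 "wd n" i j d] by simp
  show ?thesis unfolding alpha_def
    by (simp add: chain_append endp_append c c2 w s)
qed

lemma chain_fin: "finite {e. chain p w e \<noteq> 0}"
proof (induction w arbitrary: p)
  case Nil then show ?case by simp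
next
  case (Cons l w)
  obtain i j where p: "p = (i, j)" by fastforce
  show ?case
  proof (cases l)
    case Xp
    have "{e. chain p (l # w) e \<noteq> 0} \<subseteq> insert (i, j, DX) {e. chain (i + 1, j) w e \<noteq> 0}" using p Xp by auto
    then show ?thesis using Cons finite_subset by blast
  next
    case Xm
    have "{e. chain p (l # w) e \<noteq> 0} \<subseteq> insert (i - 1, j, DX) {e. chain (i - 1, j) w e \<noteq> 0}" using p Xm by auto
    then show ?thesis using Cons finite_subset by blast
  next
    case Yp
    have "{e. chain p (l # w) e \<noteq> 0} \<subseteq> insert (i, j, DY) {e. chain (i, j + 1) w e \<noteq> 0}" using p Yp by auto
    then show ?thesis using Cons finite_subset by blast
  next
    case Ym
    have "{e. chain p (l # w) e \<noteq> 0} \<subseteq> insert (i, j - 1, DY) {e. chain (i, j - 1) w e \<noteq> 0}" using p Ym by auto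
    then show ?thesis using Cons finite_subset by blast
  qed
qed

lemma fin_proj: assumes "finite {e. (a :: edge \<Rightarrow> int) e \<noteq> 0}"
  shows "finite {ij. a (fst ij, snd ij, d) \<noteq> 0}"
proof -
  have "{ij. a (fst ij, snd ij, d) \<noteq> 0} \<subseteq> (\<lambda>e. (fst e, fst (snd e))) ` {e. a e \<noteq> 0}"
    by (auto intro!: image_eqI)
  then show ?thesis using assms finite_subset by blast
qed

lemma Pc_fin: "finite {ij. Pc (alpha w) ij \<noteq> 0}"
  unfolding Pc_def alpha_def by (rule fin_proj[OF chain_fin])

lemma Qc_fin: "finite {ij. Qc (alpha w) ij \<noteq> 0}"
  unfolding Qc_def alpha_def by (rule fin_proj[OF chain_fin])

lemma supp_sum:
  fixes h :: "int \<times> int \<Rightarrow> int" and u :: "int \<times> int \<Rightarrow> real"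
  assumes "finite S" "{ij. h ij \<noteq> 0} \<subseteq> S"
  shows "(\<Sum>ij\<in>{ij. h ij \<noteq> 0}. of_int (h ij) * u ij) = (\<Sum>ij\<in>S. of_int (h ij) * u ij)"
  by (rule sum.mono_neutral_left) (use assms in auto)

lemma step_sum:
  fixes h :: "int \<times> int \<Rightarrow> int" and u :: "int \<times> int \<Rightarrow> real"
  assumes fin: "finite {ij. h ij \<noteq> 0}"
  shows "(\<Sum>ij\<in>{ij. h (fst ij, snd ij - 1) - h ij \<noteq> 0}. of_int (h (fst ij, snd ij - 1) - h ij) * u ij)
       = (\<Sum>ij\<in>{ij. h ij \<noteq> 0}. of_int (h ij) * u (fst ij, snd ij + 1)) - (\<Sum>ij\<in>{ij. h ij \<noteq> 0}. of_int (h ij) * u ij)"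
proof -
  define S where "S = {ij. h ij \<noteq> 0}"
  define up where "up = (\<lambda>ij::int\<times>int. (fst ij, snd ij + 1))"
  define T where "T = S \<union> up ` S"
  have fT: "finite T" using fin by (simp add: T_def S_def)
  have sub: "{ij. h (fst ij, snd ij - 1) - h ij \<noteq> 0} \<subseteq> T"
  proof
    fix ij assume "ij \<in> {ij. h (fst ij, snd ij - 1) - h ij \<noteq> 0}"
    then have "h (fst ij, snd ij - 1) \<noteq> 0 \<or> h ij \<noteq> 0" by auto
    then show "ij \<in> T"
    proof
      assume "h (fst ij, snd ij - 1) \<noteq> 0"
      then have "(fst ij, snd ij - 1) \<in> S" by (simp add: S_def)
      moreover have "ij = up (fst ij, snd ij - 1)" by (simp add: up_def)
      ultimately show ?thesis unfolding T_def by blast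
    qed (simp add: T_def S_def)
  qed
  have "(\<Sum>ij\<in>{ij. h (fst ij, snd ij - 1) - h ij \<noteq> 0}. of_int (h (fst ij, snd ij - 1) - h ij) * u ij)
      = (\<Sum>ij\<in>T. of_int (h (fst ij, snd ij - 1) - h ij) * u ij)"
    by (rule supp_sum[OF fT sub])
  also have "\<dots> = (\<Sum>ij\<in>T. of_int (h (fst ij, snd ij - 1)) * u ij) - (\<Sum>ij\<in>T. of_int (h ij) * u ij)"
    by (simp add: sum_subtractf left_diff_distrib)
  also have "(\<Sum>ij\<in>T. of_int (h ij) * u ij) = (\<Sum>ij\<in>S. of_int (h ij) * u ij)"
    by (rule sum.mono_neutral_right) (use fT in \<open>auto simp: T_def S_def\<close>)
  also have "(\<Sum>ij\<in>T. of_int (h (fst ij, snd ij - 1)) * u ij) = (\<Sum>ij\<in>up ` S. of_int (h (fst ij, snd ij - 1)) * u ij)"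
  proof (rule sum.mono_neutral_right[OF fT])
    show "up ` S \<subseteq> T" by (simp add: T_def)
    show "\<forall>i\<in>T - up ` S. real_of_int (h (fst i, snd i - 1)) * u i = 0"
    proof
      fix i assume i: "i \<in> T - up ` S"
      have "h (fst i, snd i - 1) = 0"
      proof (rule ccontr)
        assume "h (fst i, snd i - 1) \<noteq> 0"
        then have "(fst i, snd i - 1) \<in> S" by (simp add: S_def)
        moreover have "i = up (fst i, snd i - 1)" by (simp add: up_def)
        ultimately show False using i by blast
      qed
      then show "real_of_int (h (fst i, snd i - 1)) * u i = 0" by simp
    qed
  qed
  also have "\<dots> = (\<Sum>ij\<in>S. of_int (h ij) * u (fst ij, snd ij + 1))"
    by (subst sum.reindex) (auto simp: inj_on_def up_def)
  finally show ?thesis by (simp add: S_def)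
qed


lemma Pc_Suc: "Pc (alpha (wd (Suc n))) = (\<lambda>ij. Pc (alpha (wd n)) (fst ij, snd ij - 1) - Pc (alpha (wd n)) ij)"
  by (rule ext) (simp add: Pc_def alpha_wd_Suc del: wd.simps)

lemma Qc_Suc: "Qc (alpha (wd (Suc n))) = (\<lambda>ij. Qc (alpha (wd n)) (fst ij, snd ij - 1) - Qc (alpha (wd n)) ij)"
  by (rule ext) (simp add: Qc_def alpha_wd_Suc del: wd.simps)

lemma fg_Suc: assumes "y \<noteq> 0" shows "fg (wd (Suc n)) y = (y - 1) * fg (wd n) y"
proof -
  have "fg (wd (Suc n)) y = (\<Sum>ij\<in>{ij. Pc (alpha (wd n)) ij \<noteq> 0}. of_int (Pc (alpha (wd n)) ij) * y powi (snd ij + 1))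
     - (\<Sum>ij\<in>{ij. Pc (alpha (wd n)) ij \<noteq> 0}. of_int (Pc (alpha (wd n)) ij) * y powi (snd ij))"
    unfolding fg_def Pc_Suc using step_sum[OF Pc_fin, of "wd n" "\<lambda>ij. y powi snd ij"] by (simp del: wd.simps)
  also have "(\<Sum>ij\<in>{ij. Pc (alpha (wd n)) ij \<noteq> 0}. of_int (Pc (alpha (wd n)) ij) * y powi (snd ij + 1))
     = y * fg (wd n) y"
    unfolding fg_def sum_distrib_left
    by (rule sum.cong) (use assms in \<open>auto simp: power_int_add_1\<close>)
  also have "y * fg (wd n) y - (\<Sum>ij\<in>{ij. Pc (alpha (wd n)) ij \<noteq> 0}. of_int (Pc (alpha (wd n)) ij) * y powi (snd ij))
     = (y - 1) * fg (wd n) y" by (simp add: fg_def algebra_simps del: wd.simps)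
  finally show ?thesis .
qed

lemma gg_Suc: "gg (wd (Suc n)) x = 0"
  unfolding gg_def Qc_Suc using step_sum[OF Qc_fin, of "wd n" "\<lambda>ij. x powi fst ij"] by (simp del: wd.simps)

lemma fg_0: "fg (wd 0) y = 1 - y"
proof -
  have "fg (wd 0) y = (\<Sum>ij\<in>{(-1,1),(-1,0)}. of_int (Pc (alpha (wd 0)) ij) * y powi (snd ij))"
    unfolding fg_def by (rule supp_sum) (auto simp: Pc_def alpha_def split: if_splits)
  also have "\<dots> = 1 - y" by (simp add: Pc_def alpha_def)
  finally show ?thesis .
qed

lemma fg_wd: "y \<noteq> 0 \<Longrightarrow> fg (wd n) y = - ((y - 1) ^ Suc n)"
  by (induction n) (simp_all add: fg_0 fg_Suc del: wd.simps)


lemma hd_pow: "(deriv ^^ j) (\<lambda>y::real. c * (y - 1) ^ m) = (\<lambda>y. c * of_nat (\<Prod>i<j. m - i) * (y - 1) ^ (m - j))"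
proof (induction j)
  case 0 then show ?case by simp
next
  case (Suc j)
  show ?case
  proof (rule ext)
    fix y :: real
    define P where "P = (\<Prod>i<j. m - i)"
    have d: "((\<lambda>y. c * of_nat P * (y - 1) ^ (m - j)) has_field_derivative c * of_nat P * (of_nat (m - j) * (y - 1) ^ (m - j - 1))) (at y)"
      by (auto intro!: derivative_eq_intros)
    have "(deriv ^^ Suc j) (\<lambda>y::real. c * (y - 1) ^ m) y = deriv (\<lambda>y. c * of_nat P * (y - 1) ^ (m - j)) y"
      by (simp add: Suc P_def)
    also have "\<dots> = c * of_nat P * (of_nat (m - j) * (y - 1) ^ (m - j - 1))" by (rule DERIV_imp_deriv[OF d])
    also have "\<dots> = c * of_nat (\<Prod>i<Suc j. m - i) * (y - 1) ^ (m - Suc j)" by (simp add: P_def)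
    finally show "(deriv ^^ Suc j) (\<lambda>y::real. c * (y - 1) ^ m) y = c * of_nat (\<Prod>i<Suc j. m - i) * (y - 1) ^ (m - Suc j)" .
  qed
qed

lemma hd_zero: "(deriv ^^ j) (\<lambda>y::real. 0) = (\<lambda>y. 0)"
  by (induction j) (auto intro!: DERIV_imp_deriv)

lemma phi_wd: assumes "k > 0" shows "phi j (wd (k - 1)) = - of_nat (\<Prod>i<j. k - i) * 0 ^ (k - j) / fact j"
proof -
  have ev: "eventually (\<lambda>y. fg (wd (k - 1)) y = (-1) * (y - 1) ^ k) (nhds (1::real))"
  proof -
    have "eventually (\<lambda>y. y \<noteq> (0::real)) (nhds 1)" by (rule t1_space_nhds) simp
    then show ?thesis by eventually_elim (use assms in \<open>simp add: fg_wd\<close>)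
  qed
  have "(deriv ^^ j) (fg (wd (k - 1))) 1 = (deriv ^^ j) (\<lambda>y. (-1) * (y - 1) ^ k) 1"
    by (rule higher_deriv_cong_ev[OF ev refl])
  then show ?thesis unfolding phi_def hd_pow by simp
qed

lemma psi_wd: assumes "k > 1" shows "psi j (wd (k - 1)) = 0"
proof -
  obtain m where "k - 1 = Suc m" using assms by (cases "k - 1") auto
  moreover have "gg (wd (Suc m)) = (\<lambda>x. 0)" by (rule ext, rule gg_Suc)
  ultimately have "gg (wd (k - 1)) = (\<lambda>x. 0)" by simp
  then show ?thesis by (simp add: psi_def hd_zero)
qed

lemma fact_prod': "(\<Prod>i<k. k - i) = fact k"
  by (simp add: fact_prod_rev atLeast0LessThan)

theorem proposition4p1:
  fixes k :: nat
  assumes "k > 1"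
  shows "\<exists>w. comm_word w \<and> w \<in> Gs (k - 1) \<and> (\<forall>j. 1 \<le> j \<and> j < k \<longrightarrow> phi j w = 0)
           \<and> phi k w = -1 \<and> (\<forall>j\<ge>1. w \<in> Hs j \<and> psi j w = 0)"
proof (intro exI conjI allI impI)
  let ?w = "wd (k - 1)"
  show cw: "comm_word ?w" by (rule wd_comm)
  have k0: "k > 0" using assms by simp
  have phi0: "phi j ?w = 0" if "j < k" for j
  proof -
    have "phi j ?w = - of_nat (\<Prod>i<j. k - i) * 0 ^ (k - j) / fact j" by (rule phi_wd[OF k0])
    then show ?thesis using that by simp
  qed
  show "phi j ?w = 0" if "1 \<le> j \<and> j < k" for j using that phi0 by blast
  show "phi k ?w = -1"
  proof -
    have "phi k ?w = - of_nat (\<Prod>i<k. k - i) * 0 ^ (k - k) / fact k" by (rule phi_wd[OF k0])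
    then show ?thesis by (simp add: fact_prod')
  qed
  have "j \<le> k - 1 \<Longrightarrow> ?w \<in> Gs j" for j
    by (induction j) (use cw phi0 in \<open>auto simp del: wd.simps\<close>)
  then show "?w \<in> Gs (k - 1)" by simp
  have hs: "?w \<in> Hs j" for j
    by (induction j) (use cw psi_wd[OF assms] in \<open>auto simp del: wd.simps\<close>)
  show "?w \<in> Hs j" for j by (rule hs)
  show "psi j ?w = 0" for j by (rule psi_wd[OF assms])
qed

end
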